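(* For every real number $C$ with $1 < C < \log_2 e$ there exists $\varepsilon=\varepsilon(C)>0$ such that for all integers $s \ge 2$ and $q$ with $1 \le \frac{q}{s} < C$, we have $R(s,q) \le (2-\varepsilon)^q$.
   Context: Let $Z_s$ be the ring of integers modulo $s$. A family $\mathcal{F} \subseteq Z_s^q$ is covering if for every ordered pair of distinct vectors $u,v \in \mathcal{F}$ and every $a \in Z_s$ there is a coordinate $i$ with $u_i - v_i = a$. $R(s,q)$ denotes the maximum possible cardinality of a covering family in $Z_s^q$. *)

theory Defs
  imports Complex_Main
begin

text \<open>Z_s^q: vectors u with coordinates u i in {0..<s} for i < q, and u i = 0 for i >= q
  (extensional representation, so distinct vectors are distinct functions).\<close>
definition Zvecs :: "nat \<Rightarrow> nat \<Rightarrow> (nat \<Rightarrow> nat) set" where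
  "Zvecs s q = {u. (\<forall>i<q. u i < s) \<and> (\<forall>i\<ge>q. u i = 0)}"

definition covering :: "nat \<Rightarrow> nat \<Rightarrow> (nat \<Rightarrow> nat) set \<Rightarrow> bool" where
  "covering s q F \<longleftrightarrow> F \<subseteq> Zvecs s q \<and>
     (\<forall>u\<in>F. \<forall>v\<in>F. u \<noteq> v \<longrightarrow>
        (\<forall>a<s. \<exists>i<q. (int (u i) - int (v i)) mod int s = int a))"

definition R :: "nat \<Rightarrow> nat \<Rightarrow> nat" where
  "R s q = Max {card F | F. covering s q F}"

end

theory Submission imports Defs "HOL-Computational_Algebra.Polynomial" "Jordan_Normal_Form.Determinant" "HOL-Analysis.Harmonic_Numbers"
begin

definition om :: "nat \<Rightarrow> complex" where "om s = cis (2 * pi / real s)"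

lemma om_pow_s: "s > 0 \<Longrightarrow> om s ^ s = 1"
proof -
  assume "s > 0"
  have "om s ^ s = cis (real s * (2 * pi / real s))" unfolding om_def by (rule Complex.DeMoivre)
  also have "real s * (2 * pi / real s) = 2 * pi" using \<open>s > 0\<close> by simp
  finally show ?thesis by simp
qed

lemma om_nz: "om s \<noteq> 0"
  unfolding om_def by simp

lemma om_pow_ne1:
  assumes "0 < k" "k < s" shows "om s ^ k \<noteq> 1"
proof
  assume h: "om s ^ k = 1"
  have "cos (real k * (2 * pi / real s)) = 1"
    using cos_n_Re_cis_pow_n[of k "2 * pi / real s"] h unfolding om_def by simp
  then obtain n :: int where n: "real k * (2 * pi / real s) = real_of_int n * 2 * pi"
    using cos_one_2pi_int by blast
  have "real k / real s = real_of_int n" using n assms by (simp add: field_simps)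
  moreover have "0 < real k / real s" "real k / real s < 1" using assms by auto
  ultimately have "0 < n" "n < 1" by linarith+
  then show False by simp
qed

lemma om_pow_mod: "s > 0 \<Longrightarrow> om s ^ n = om s ^ (n mod s)"
proof -
  assume "s > 0"
  have "om s ^ n = om s ^ (s * (n div s) + n mod s)" by (simp only: mult_div_mod_eq)
  also have "\<dots> = (om s ^ s) ^ (n div s) * om s ^ (n mod s)" by (simp only: power_add power_mult)
  finally show ?thesis using om_pow_s[OF \<open>s>0\<close>] by simp
qed

definition PP :: "(nat \<Rightarrow> complex) \<Rightarrow> nat set \<Rightarrow> complex poly" where
  "PP z A = (\<Prod>i\<in>A. [:1, z i:])"

lemma prod_monom1: "finite X \<Longrightarrow> (\<Prod>i\<in>X. monom (z i) 1) = monom (\<Prod>i\<in>X. z i) (card X)"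
  by (induction X rule: finite_induct) (auto simp: mult_monom)

lemma coeff_PP:
  assumes "finite A"
  shows "coeff (PP z A) k = (\<Sum>S\<in>{S. S \<subseteq> A \<and> card S = k}. \<Prod>i\<in>S. z i)"
proof -
  have "PP z A = (\<Prod>i\<in>A. monom (z i) 1 + 1)"
    unfolding PP_def by (intro prod.cong refl) (simp add: monom_altdef one_pCons)
  also have "\<dots> = (\<Sum>X\<in>Pow A. (\<Prod>i\<in>X. monom (z i) 1) * (\<Prod>i\<in>A - X. 1))"
    by (rule prod_add[OF assms])
  also have "\<dots> = (\<Sum>X\<in>Pow A. monom (\<Prod>i\<in>X. z i) (card X))"
  proof (intro sum.cong refl)
    fix X assume "X \<in> Pow A"
    then have "finite X" using assms finite_subset by blast
    then show "(\<Prod>i\<in>X. monom (z i) 1) * (\<Prod>i\<in>A - X. 1) = monom (\<Prod>i\<in>X. z i) (card X)"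
      using prod_monom1[OF \<open>finite X\<close>, of z] by simp
  qed
  finally have "coeff (PP z A) k = (\<Sum>X\<in>Pow A. if card X = k then (\<Prod>i\<in>X. z i) else 0)"
    by (simp add: coeff_sum coeff_monom)
  also have "\<dots> = (\<Sum>X\<in>{X \<in> Pow A. card X = k}. \<Prod>i\<in>X. z i)"
    by (rule sum.inter_filter[symmetric]) (use assms in simp)
  also have "{X \<in> Pow A. card X = k} = {S. S \<subseteq> A \<and> card S = k}" by auto
  finally show ?thesis .
qed

lemma degree_PP: "finite A \<Longrightarrow> degree (PP z A) \<le> card A"
proof -
  assume "finite A"
  have "degree (PP z A) \<le> sum (degree \<circ> (\<lambda>i. [:1, z i:])) A"
    unfolding PP_def by (rule degree_prod_sum_le[OF \<open>finite A\<close>])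
  also have "\<dots> \<le> (\<Sum>i\<in>A. 1)" by (intro sum_mono) simp
  finally show ?thesis by simp
qed

lemma coeff_roots:
  assumes "0 < k" "k < s"
  shows "coeff (PP (\<lambda>a. om s ^ a) {..<s}) k = 0"
proof -
  let ?Q = "PP (\<lambda>a. om s ^ a) {..<s}"
  have s0: "s > 0" using assms by simp
  then obtain n where sn: "s = Suc n" by (cases s) auto
  have "pcompose ?Q [:0, om s:] = (\<Prod>a<s. [:1, om s ^ Suc a:])"
    unfolding PP_def pcompose_prod by (intro prod.cong refl) (simp add: pcompose_pCons)
  also have "\<dots> = ?Q"
  proof -
    have "(\<Prod>a<Suc n. [:1, om s ^ Suc a:]) = (\<Prod>a<n. [:1, om s ^ Suc a:]) * [:1, om s ^ Suc n:]"
      by (rule prod.lessThan_Suc)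
    also have "[:1, om s ^ Suc n:] = [:1, om s ^ 0:]" using om_pow_s[OF s0] sn by simp
    also have "(\<Prod>a<n. [:1, om s ^ Suc a:]) * [:1, om s ^ 0:] = (\<Prod>a<Suc n. [:1, om s ^ a:])"
      by (subst prod.lessThan_Suc_shift) (simp only: mult.commute)
    finally show ?thesis unfolding PP_def sn .
  qed
  finally have "coeff (pcompose ?Q [:0, om s:]) k = coeff ?Q k" by simp
  then have "om s ^ k * coeff ?Q k = coeff ?Q k" by (simp add: coeff_pcompose_linear)
  then have "(om s ^ k - 1) * coeff ?Q k = 0" by (simp add: algebra_simps)
  then show ?thesis using om_pow_ne1[OF assms] by simp
qed


lemma vanish:
  fixes z :: "nat \<Rightarrow> complex"
  assumes s0: "0 < s" and inj: "inj_on t {..<s}" and tA: "t ` {..<s} \<subseteq> {..<q}"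
    and zt: "\<And>a. a < s \<Longrightarrow> z (t a) = om s ^ a"
    and j1: "q - s < j" and j2: "j < s"
  shows "coeff (PP z {..<q}) j = 0"
proof -
  let ?T = "t ` {..<s}"
  let ?R = "{..<q} - ?T"
  have cardT: "card ?T = s" using card_image[OF inj] by simp
  have PT: "PP z ?T = PP (\<lambda>a. om s ^ a) {..<s}"
    unfolding PP_def by (simp add: prod.reindex[OF inj] zt)
  have split: "PP z {..<q} = PP z ?T * PP z ?R"
    unfolding PP_def by (subst prod.subset_diff[OF tA]) (simp_all add: mult.commute)
  have "card ?R = q - s" using card_Diff_subset[OF _ tA] cardT by simp
  then have degR: "degree (PP z ?R) < j"
    using degree_PP[of ?R z] j1 by simp
  have "coeff (PP z {..<q}) j = (\<Sum>i\<le>j. coeff (PP z ?T) i * coeff (PP z ?R) (j - i))"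
    unfolding split coeff_mult ..
  also have "\<dots> = 0"
  proof (intro sum.neutral ballI)
    fix i assume i: "i \<in> {..j}"
    show "coeff (PP z ?T) i * coeff (PP z ?R) (j - i) = 0"
    proof (cases "i = 0")
      case True
      then show ?thesis using degR by (simp add: coeff_eq_0)
    next
      case False
      then have "coeff (PP z ?T) i = 0" unfolding PT using i j2 by (intro coeff_roots) auto
      then show ?thesis by simp
    qed
  qed
  finally show ?thesis .
qed

lemma rank_bound:
  fixes a b :: "'x \<Rightarrow> 'y \<Rightarrow> complex"
  assumes fX: "finite X" and fY: "finite Y" and c: "c \<noteq> 0"
    and G: "\<And>u v. u \<in> X \<Longrightarrow> v \<in> X \<Longrightarrow> (\<Sum>S\<in>Y. a u S * b v S) = (if u = v then c else 0)"
  shows "card X \<le> card Y"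
proof (rule ccontr)
  assume nt: "\<not> card X \<le> card Y"
  define n where "n = card X"
  define N where "N = card Y"
  have Nn: "N < n" using nt unfolding n_def N_def by simp
  obtain f where f: "bij_betw f {0..<n} X" using ex_bij_betw_nat_finite[OF fX] n_def by blast
  obtain g where g: "bij_betw g {0..<N} Y" using ex_bij_betw_nat_finite[OF fY] N_def by blast
  define A where "A = Matrix.mat n n (\<lambda>(k,l). if l < N then a (f k) (g l) else 0)"
  define B where "B = Matrix.mat n n (\<lambda>(l,k). if l < N then b (f k) (g l) else 0)"
  have A: "A \<in> carrier_mat n n" and B: "B \<in> carrier_mat n n" unfolding A_def B_def by auto
  have AB: "A * B = c \<cdot>\<^sub>m 1\<^sub>m n"
  proof (rule eq_matI)
    fix k k' assume "k < dim_row (c \<cdot>\<^sub>m 1\<^sub>m n)" "k' < dim_col (c \<cdot>\<^sub>m 1\<^sub>m n)"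
    then have k: "k < n" "k' < n" by auto
    have "(A * B) $$ (k, k') = (\<Sum>l\<in>{0..<n}. (if l < N then a (f k) (g l) * b (f k') (g l) else 0))"
      using k A B unfolding A_def B_def by (auto simp: scalar_prod_def intro!: sum.cong)
    also have "\<dots> = (\<Sum>l\<in>{l\<in>{0..<n}. l < N}. a (f k) (g l) * b (f k') (g l))"
      by (rule sum.inter_filter[symmetric]) simp
    also have "{l\<in>{0..<n}. l < N} = {0..<N}" using Nn by auto
    also have "(\<Sum>l\<in>{0..<N}. a (f k) (g l) * b (f k') (g l)) = (\<Sum>S\<in>Y. a (f k) S * b (f k') S)"
      by (rule sum.reindex_bij_betw[OF g])
    also have "\<dots> = (if f k = f k' then c else 0)"
      using G f k by (auto simp: bij_betw_def)
    also have "\<dots> = (if k = k' then c else 0)"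
      using f k by (auto simp: bij_betw_def inj_on_def)
    finally show "(A * B) $$ (k, k') = (c \<cdot>\<^sub>m 1\<^sub>m n) $$ (k, k')" using k by simp
  qed (use A B in auto)
  have "multrow (n - 1) 0 B = B"
    by (rule eq_matI) (use Nn B in \<open>auto simp: B_def\<close>)
  then have "det B = 0" using det_multrow[of "n - 1" n B 0] Nn B by simp
  then have d0: "det (A * B) = 0" using det_mult[OF A B] by simp
  have dc: "det (c \<cdot>\<^sub>m 1\<^sub>m n) = c ^ n" by simp
  have "det (c \<cdot>\<^sub>m 1\<^sub>m n) = 0" using d0 unfolding AB .
  then have "c ^ n = 0" by (rule trans[OF dc[symmetric]])
  then show False using c by (simp add: power_eq_0_iff)
qed

lemma om_diff:
  assumes s0: "0 < s" and h: "(int x - int y) mod int s = int a"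
  shows "om s ^ x * inverse (om s) ^ y = om s ^ a"
proof -
  have "(int y + int a) mod int s = (int y + (int x - int y)) mod int s"
    unfolding h[symmetric] by (simp add: mod_add_right_eq)
  then have "int ((y + a) mod s) = int (x mod s)" by (simp add: zmod_int)
  then have m: "(y + a) mod s = x mod s" by simp
  have "om s ^ x = om s ^ (y + a)" using om_pow_mod[OF s0, of x] om_pow_mod[OF s0, of "y + a"] m by simp
  then show ?thesis using om_nz[of s] by (simp add: power_add power_inverse field_simps)
qed

lemma covering_bound:
  assumes cov: "covering s q F" and s2: "2 \<le> s" and sq: "s \<le> q" and q2: "q + 2 \<le> 2 * s"
  shows "card F \<le> q choose (q - s + 1)"
proof (cases "finite F")
  case False
  then show ?thesis by simp
next
  case True
  define j where "j = q - s + 1"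
  define Y where "Y = {S. S \<subseteq> {..<q} \<and> card S = j}"
  have s0: "0 < s" using s2 by simp
  have cardY: "card Y = q choose j" unfolding Y_def using n_subsets[of "{..<q}" j] by simp
  have fY: "finite Y" unfolding Y_def by (rule finite_subset[of _ "Pow {..<q}"]) auto
  have jq: "j \<le> q" using s2 sq unfolding j_def by simp
  define a where "a = (\<lambda>(u::nat\<Rightarrow>nat) S. \<Prod>i\<in>S. om s ^ u i)"
  define b where "b = (\<lambda>(v::nat\<Rightarrow>nat) S. \<Prod>i\<in>S. inverse (om s) ^ v i)"
  have "card F \<le> card Y"
  proof (rule rank_bound[OF True fY, of "of_nat (q choose j)" a b])
    show "(of_nat (q choose j) :: complex) \<noteq> 0" using jq by simp
    fix u v assume u: "u \<in> F" and v: "v \<in> F"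
    define z where "z = (\<lambda>i. om s ^ u i * inverse (om s) ^ v i)"
    have "(\<Sum>S\<in>Y. a u S * b v S) = (\<Sum>S\<in>Y. \<Prod>i\<in>S. z i)"
      unfolding a_def b_def z_def by (simp add: prod.distrib)
    also have "\<dots> = coeff (PP z {..<q}) j" unfolding Y_def by (simp add: coeff_PP)
    finally have eq: "(\<Sum>S\<in>Y. a u S * b v S) = coeff (PP z {..<q}) j" .
    show "(\<Sum>S\<in>Y. a u S * b v S) = (if u = v then of_nat (q choose j) else 0)"
    proof (cases "u = v")
      case True
      then have "(\<Sum>S\<in>Y. a u S * b v S) = (\<Sum>S\<in>Y. 1)"
        unfolding a_def b_def using om_nz[of s]
        by (simp add: prod.distrib[symmetric] power_inverse field_simps)
      then show ?thesis using True cardY by simp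
    next
      case False
      have cov2: "\<forall>u\<in>F. \<forall>v\<in>F. u \<noteq> v \<longrightarrow>
          (\<forall>a<s. \<exists>i<q. (int (u i) - int (v i)) mod int s = int a)"
        using cov unfolding covering_def by (rule conjunct2)
      note cv = cov2[rule_format, OF u v False]
      define t where "t = (\<lambda>a. SOME i. i < q \<and> (int (u i) - int (v i)) mod int s = int a)"
      have t: "t a < q \<and> (int (u (t a)) - int (v (t a))) mod int s = int a" if "a < s" for a
        unfolding t_def using someI_ex[of "\<lambda>i. i < q \<and> (int (u i) - int (v i)) mod int s = int a", OF cv[OF that]] .
      have inj: "inj_on t {..<s}"
      proof (rule inj_onI)
        fix x y assume xs: "x \<in> {..<s}" and ys: "y \<in> {..<s}" and txy: "t x = t y"
        have hx: "(int (u (t x)) - int (v (t x))) mod int s = int x" using t[of x] xs by simp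
        have hy: "(int (u (t y)) - int (v (t y))) mod int s = int y" using t[of y] ys by simp
        have "int x = (int (u (t x)) - int (v (t x))) mod int s" by (rule hx[symmetric])
        also have "\<dots> = (int (u (t y)) - int (v (t y))) mod int s" by (simp only: txy)
        also have "\<dots> = int y" by (rule hy)
        finally show "x = y" by simp
      qed
      have tA: "t ` {..<s} \<subseteq> {..<q}" using t by auto
      have zt: "z (t a) = om s ^ a" if "a < s" for a
        unfolding z_def using om_diff[OF s0] t[OF that] by blast
      have "coeff (PP z {..<q}) j = 0"
        by (rule vanish[OF s0 inj tA zt]) (use q2 sq j_def in auto)
      then show ?thesis using eq False by simp
    qed
  qed
  then show ?thesis using cardY j_def by simp
qed

lemma choose_le_half:
  assumes "1 \<le> q" shows "q choose j \<le> 2 ^ (q - 1)"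
proof -
  obtain p where p: "q = Suc p" using assms by (cases q) auto
  show ?thesis
  proof (cases j)
    case 0
    then show ?thesis by simp
  next
    case (Suc j')
    have "(p choose j') + (p choose Suc j') \<le> 2 ^ p"
    proof (cases "Suc j' \<le> p")
      case True
      have "(p choose j') + (p choose Suc j') = (\<Sum>k\<in>{j', Suc j'}. p choose k)" by simp
      also have "\<dots> \<le> (\<Sum>k\<le>p. p choose k)" by (rule sum_mono2) (use True in auto)
      also have "\<dots> = 2 ^ p" by (rule choose_row_sum)
      finally show ?thesis .
    next
      case False
      then have "p choose Suc j' = 0" by (simp add: binomial_eq_0)
      then show ?thesis using binomial_le_pow2[of p j'] by linarith
    qed
    then show ?thesis using p Suc by simp
  qed
qed

lemma B_lt_2: "3/2 * 2 powr (2/5) < (2::real)"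
proof -
  define x :: real where "x = 2 powr (2/5)"
  have x0: "0 \<le> x" unfolding x_def by simp
  have "x ^ 5 = 2 powr (real 5 * (2/5))" unfolding x_def by (rule powr_power) simp
  also have "\<dots> = 4" by simp
  finally have x5: "x ^ 5 = 4" .
  have "x < 4/3"
  proof (rule ccontr)
    assume "\<not> x < 4/3"
    then have "(4/3::real) ^ 5 \<le> x ^ 5" by (intro power_mono) auto
    moreover have "(4/3::real) ^ 5 = 1024/243" by (simp add: eval_nat_numeral)
    ultimately show False using x5 by simp
  qed
  then show ?thesis unfolding x_def by simp
qed

theorem proposition4p3:
  fixes C :: real
  assumes "1 < C" and "C < log 2 (exp 1)"
  shows "\<exists>\<epsilon>>0. \<forall>s q :: nat. 2 \<le> s \<and> 1 \<le> real q / real s \<and> real q / real s < C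
            \<longrightarrow> real (R s q) \<le> (2 - \<epsilon>) ^ q"
proof -
  define B :: real where "B = 3/2 * 2 powr (2/5)"
  have B2: "B < 2" unfolding B_def by (rule B_lt_2)
  have B0: "0 \<le> B" unfolding B_def by simp
  define \<epsilon> where "\<epsilon> = min (1/14) (2 - B)"
  have e0: "\<epsilon> > 0" unfolding \<epsilon>_def using B2 by simp
  have e1: "\<epsilon> \<le> 1/14" "\<epsilon> \<le> 2 - B" unfolding \<epsilon>_def by (rule min.cobounded1, rule min.cobounded2)
  have logC: "log 2 (exp 1) = 1 / ln 2" by (simp add: log_def)
  show ?thesis
  proof (intro exI[of _ \<epsilon>] conjI allI impI e0)
    fix s q :: nat
    assume h: "2 \<le> s \<and> 1 \<le> real q / real s \<and> real q / real s < C"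
    have s2: "2 \<le> s" using h by simp
    have spos: "real s > 0" using s2 by simp
    have sq: "s \<le> q" using h spos by (simp add: field_simps)
    have "real q / real s < 1 / ln 2" using h assms(2) logC by simp
    then have "real q * ln 2 < real s" using spos ln_2_less_1 by (simp add: field_simps)
    moreover have "2/3 * real q \<le> ln 2 * real q" using ln2_ge_two_thirds by (intro mult_right_mono) auto
    ultimately have "2 * real q < 3 * real s" by (simp add: algebra_simps)
    then have key: "2 * q < 3 * s" by linarith
    have q2: "q + 2 \<le> 2 * s" using key s2 by linarith
    define j where "j = q - s + 1"
    define N where "N = q choose j"
    have bound: "card F \<le> N" if "covering s q F" for F
      using covering_bound[OF that s2 sq q2] unfolding N_def j_def .
    have RN: "R s q \<le> N"
    proof -
      have fin: "finite {card F |F. covering s q F}"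
        by (rule finite_subset[of _ "{..N}"]) (use bound in auto)
      have ne: "covering s q {}" unfolding covering_def by simp
      show ?thesis unfolding R_def
        by (rule Max.boundedI[OF fin]) (use ne bound in auto)
    qed
    have "real N \<le> (2 - \<epsilon>) ^ q"
    proof (cases "q \<le> 14")
      case True
      have "N \<le> 2 ^ (q - 1)" unfolding N_def using sq s2 by (intro choose_le_half) simp
      then have "real N \<le> 2 ^ (q - 1)" by (metis of_nat_le_iff of_nat_numeral of_nat_power)
      also have "(2::real) ^ (q - 1) = 2 ^ q * (1/2)" using sq s2
        by (cases q) auto
      also have "\<dots> \<le> 2 ^ q * (1 + real q * (- \<epsilon> / 2))"
      proof -
        have "real q * \<epsilon> \<le> 14 * (1/14)" using True e1 e0 by (intro mult_mono) auto
        then show ?thesis by (intro mult_left_mono) auto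
      qed
      also have "\<dots> \<le> 2 ^ q * (1 + (- \<epsilon> / 2)) ^ q"
        by (intro mult_left_mono Bernoulli_inequality) (use e1 in auto)
      also have "\<dots> = (2 - \<epsilon>) ^ q" by (simp add: power_mult_distrib[symmetric] algebra_simps)
      finally show ?thesis .
    next
      case False
      have "j + s = q + 1" unfolding j_def using sq by simp
      then have j5: "5 * j \<le> 2 * q" using key False by linarith
      have "(3/2::real) ^ q = (1/2 + 1) ^ q" by simp
      also have "\<dots> = (\<Sum>k\<le>q. of_nat (q choose k) * (1/2) ^ k * 1 ^ (q - k))"
        by (rule binomial_ring)
      finally have "(3/2::real) ^ q = (\<Sum>k\<le>q. of_nat (q choose k) * (1/2) ^ k)" by simp
      moreover have "of_nat (q choose j) * (1/2::real) ^ j \<le> (\<Sum>k\<le>q. of_nat (q choose k) * (1/2) ^ k)"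
        by (rule member_le_sum) (use sq s2 j_def in auto)
      ultimately have "real N * (1/2) ^ j \<le> (3/2) ^ q" unfolding N_def by simp
      then have "real N \<le> (3/2) ^ q * 2 ^ j" by (simp add: field_simps)
      also have "(2::real) ^ j = 2 powr (real j)" by (simp add: powr_realpow)
      also have "\<dots> \<le> 2 powr (real q * (2/5))" by (intro powr_mono) (use j5 in auto)
      also have "(3/2) ^ q * 2 powr (real q * (2/5)) = B ^ q"
        unfolding B_def power_mult_distrib by (simp add: powr_power)
      also have "\<dots> \<le> (2 - \<epsilon>) ^ q" by (intro power_mono) (use B0 e1 in auto)
      finally show ?thesis by simp
    qed
    then show "real (R s q) \<le> (2 - \<epsilon>) ^ q" using RN
      by (meson of_nat_le_iff order_trans)
  qed
qed

end
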